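(* Let $G$ be a hereditarily normal topological group and let $S,T\subseteq G$ be compact subspaces. Suppose $S$ is separable, $s\in S$ is a limit (non-isolated) point of $S$, and $t\in T$ has uncountable character in $T$. Then there exists a compact set $C\subseteq T$ with $t\in C$ such that $t$ has uncountable character in $C$ and $sC\subseteq St$, where $sC=\{sc: c\in C\}$ and $St=\{xt : x\in S\}$.
   Context: All spaces are assumed to be $T_1$. The group operation is written multiplicatively. The character of a point $t$ in a space $Y$ is the minimal cardinality of a local base at $t$ in $Y$. *)

theory Defs
  imports "HOL-Analysis.Analysis" "HOL-Algebra.Group"
begin

definition topological_group :: "('a, 'b) monoid_scheme \<Rightarrow> 'a topology \<Rightarrow> bool" where
  "topological_group G X \<longleftrightarrow>
     group G \<and> topspace X = carrier G \<and>
     continuous_map (prod_topology X X) X (\<lambda>(x, y). x \<otimes>\<^bsub>G\<^esub> y) \<and>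
     continuous_map X X (m_inv G)"

definition countable_character_at :: "'a topology \<Rightarrow> 'a \<Rightarrow> bool" where
  "countable_character_at X x \<longleftrightarrow>
     (\<exists>\<B>. countable \<B> \<and> (\<forall>V\<in>\<B>. openin X V \<and> x \<in> V) \<and>
          (\<forall>U. openin X U \<and> x \<in> U \<longrightarrow> (\<exists>V\<in>\<B>. V \<subseteq> U)))"

end

theory Submission
  imports Defs
begin

lemma cc_from_gdelta:
  assumes reg: "regular_space X" and H: "Hausdorff_space X" and K: "compactin X T" and tT: "t \<in> T"
    and cF: "countable F" and Fo: "\<forall>W\<in>F. openin X W \<and> t \<in> W"
    and Fs: "\<forall>c\<in>T. c \<noteq> t \<longrightarrow> (\<exists>W\<in>F. c \<notin> W)"
  shows "countable_character_at (subtopology X T) t"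
proof -
  have Ttop: "T \<subseteq> topspace X" using K compactin_subset_topspace by blast
  have "\<forall>W\<in>F. \<exists>U. openin X U \<and> t \<in> U \<and> X closure_of U \<subseteq> W"
  proof
    fix W assume W: "W \<in> F"
    have "closedin X (topspace X - W)" using Fo W by blast
    moreover have "t \<in> topspace X - (topspace X - W)" using Fo W tT Ttop by blast
    ultimately obtain U where "openin X U" "t \<in> U" "disjnt (topspace X - W) (X closure_of U)"
      using reg unfolding regular_space by blast
    then show "\<exists>U. openin X U \<and> t \<in> U \<and> X closure_of U \<subseteq> W"
      using closure_of_subset_topspace by (fastforce simp: disjnt_iff)
  qed
  then obtain h where h: "\<forall>W\<in>F. openin X (h W) \<and> t \<in> h W \<and> X closure_of (h W) \<subseteq> W"
    by metis
  define B where "B = (\<lambda>\<F>. T \<inter> (topspace X \<inter> \<Inter>(h ` \<F>))) ` {\<F>. finite \<F> \<and> \<F> \<subseteq> F}"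
  show ?thesis unfolding countable_character_at_def
  proof (intro exI conjI)
    show "countable B" unfolding B_def using countable_Collect_finite_subset[OF cF] by blast
  next
    show "\<forall>V\<in>B. openin (subtopology X T) V \<and> t \<in> V"
    proof
    fix V assume "V \<in> B"
    then obtain \<F> where F: "finite \<F>" "\<F> \<subseteq> F" and V: "V = T \<inter> (topspace X \<inter> \<Inter>(h ` \<F>))"
      unfolding B_def by blast
    have "openin X (topspace X \<inter> \<Inter>(h ` \<F>))"
    proof (cases "\<F> = {}")
      case True then show ?thesis by simp
    next
      case False
      then have "openin X (\<Inter>(h ` \<F>))" using F h by (intro openin_Inter) auto
      then show ?thesis using openin_subset by (metis inf.absorb2)
    qed
    then show "openin (subtopology X T) V \<and> t \<in> V"
      using V F h tT Ttop by (auto simp: openin_subtopology)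
    qed
  next
    show "\<forall>U. openin (subtopology X T) U \<and> t \<in> U \<longrightarrow> (\<exists>V\<in>B. V \<subseteq> U)"
    proof (intro allI impI)
    fix U assume U: "openin (subtopology X T) U \<and> t \<in> U"
    then obtain U' where U': "openin X U'" "U = U' \<inter> T" by (auto simp: openin_subtopology)
    have cpt: "compactin X (T - U')"
      using closed_compactin[OF K, of "T - U'"] compactin_imp_closedin[OF H K] U'(1) by blast
    have cov: "T - U' \<subseteq> \<Union>((\<lambda>W. topspace X - X closure_of (h W)) ` F)"
    proof
      fix c assume c: "c \<in> T - U'"
      then have "c \<noteq> t" using U U' by blast
      then obtain W where "W \<in> F" "c \<notin> W" using Fs c by blast
      then show "c \<in> \<Union>((\<lambda>W. topspace X - X closure_of (h W)) ` F)"
        using h c Ttop by blast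
    qed
    have opn: "\<forall>V\<in>(\<lambda>W. topspace X - X closure_of (h W)) ` F. openin X V"
      by (auto intro: openin_diff closedin_closure_of)
    obtain \<F>' where F': "finite \<F>'" "\<F>' \<subseteq> (\<lambda>W. topspace X - X closure_of (h W)) ` F"
       "T - U' \<subseteq> \<Union>\<F>'"
      using cpt[unfolded compactin_def, THEN conjunct2, rule_format, OF conjI[OF opn cov]] by blast
    then obtain \<F> where F: "finite \<F>" "\<F> \<subseteq> F" "\<F>' = (\<lambda>W. topspace X - X closure_of (h W)) ` \<F>"
      by (meson finite_subset_image)
    have "T \<inter> (topspace X \<inter> \<Inter>(h ` \<F>)) \<subseteq> U"
    proof
      fix c assume c: "c \<in> T \<inter> (topspace X \<inter> \<Inter>(h ` \<F>))"
      show "c \<in> U"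
      proof (rule ccontr)
        assume "c \<notin> U"
        then have "c \<in> T - U'" using c U' by blast
        then have "c \<in> \<Union>\<F>'" using F'(3) by blast
        then obtain W where W: "W \<in> \<F>" "c \<notin> X closure_of (h W)" using F(3) by blast
        have "c \<in> h W" using c W(1) by blast
        moreover have "openin X (h W)" using h W(1) F(2) by blast
        then have "h W \<subseteq> X closure_of (h W)"
          by (intro closure_of_subset openin_subset)
        ultimately show False using W(2) by blast
      qed
    qed
    then show "\<exists>V\<in>B. V \<subseteq> U" unfolding B_def using F by blast
    qed
  qed
qed

lemma tg_left:
  assumes "topological_group G X" "a \<in> carrier G"
  shows "continuous_map X X (\<lambda>c. a \<otimes>\<^bsub>G\<^esub> c)"
proof -
  have tg: "topspace X = carrier G" "continuous_map (prod_topology X X) X (\<lambda>(x, y). x \<otimes>\<^bsub>G\<^esub> y)"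
    using assms(1) unfolding topological_group_def by auto
  have "continuous_map X (prod_topology X X) (\<lambda>c. (a, c))"
    using assms(2) tg(1) by (intro continuous_map_pairedI) (auto simp: continuous_map_id[unfolded id_def])
  then have "continuous_map X X ((\<lambda>(x, y). x \<otimes>\<^bsub>G\<^esub> y) \<circ> (\<lambda>c. (a, c)))"
    using continuous_map_compose tg(2) by blast
  then show ?thesis by (simp add: o_def)
qed

lemma tg_right:
  assumes "topological_group G X" "a \<in> carrier G"
  shows "continuous_map X X (\<lambda>c. c \<otimes>\<^bsub>G\<^esub> a)"
proof -
  have tg: "topspace X = carrier G" "continuous_map (prod_topology X X) X (\<lambda>(x, y). x \<otimes>\<^bsub>G\<^esub> y)"
    using assms(1) unfolding topological_group_def by auto
  have "continuous_map X (prod_topology X X) (\<lambda>c. (c, a))"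
    using assms(2) tg(1) by (intro continuous_map_pairedI) (auto simp: continuous_map_id[unfolded id_def])
  then have "continuous_map X X ((\<lambda>(x, y). x \<otimes>\<^bsub>G\<^esub> y) \<circ> (\<lambda>c. (c, a)))"
    using continuous_map_compose tg(2) by blast
  then show ?thesis by (simp add: o_def)
qed

theorem lemma2p7:
  fixes G :: "('a, 'b) monoid_scheme" and X :: "'a topology"
  assumes "topological_group G X"
    and "t1_space X"
    and "hereditarily normal_space X"
    and "compactin X S" and "compactin X T"
    and "separable_space (subtopology X S)"
    and "s \<in> S" and "s \<in> X derived_set_of S"
    and "t \<in> T" and "\<not> countable_character_at (subtopology X T) t"
  shows "\<exists>C. compactin X C \<and> C \<subseteq> T \<and> t \<in> C \<and>
             \<not> countable_character_at (subtopology X C) t \<and>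
             (\<lambda>c. s \<otimes>\<^bsub>G\<^esub> c) ` C \<subseteq> (\<lambda>x. x \<otimes>\<^bsub>G\<^esub> t) ` S"
proof -
  have grp: "group G" and top: "topspace X = carrier G"
    using assms(1) unfolding topological_group_def by auto
  have normX: "normal_space X"
    using assms(3) unfolding hereditarily by (metis order_refl subtopology_topspace)
  have HX: "Hausdorff_space X" using normX assms(2) normal_t1_imp_Hausdorff_space by blast
  have RX: "regular_space X" using normX assms(2) normal_t1_imp_regular_space by blast
  have Ssub: "S \<subseteq> carrier G" using assms(4) compactin_subset_topspace top by blast
  have Tsub: "T \<subseteq> carrier G" using assms(5) compactin_subset_topspace top by blast
  have sG: "s \<in> carrier G" and tG: "t \<in> carrier G" using Ssub Tsub assms(7,9) by auto
  define St where "St = (\<lambda>x. x \<otimes>\<^bsub>G\<^esub> t) ` S"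
  have cSt: "compactin X St" unfolding St_def using image_compactin[OF assms(4) tg_right[OF assms(1) tG]] .
  have clSt: "closedin X St" using compactin_imp_closedin[OF HX cSt] .
  define C where "C = {c \<in> T. s \<otimes>\<^bsub>G\<^esub> c \<in> St}"
  have "C = T \<inter> {c \<in> topspace X. s \<otimes>\<^bsub>G\<^esub> c \<in> St}" using Tsub top by (auto simp: C_def)
  moreover have "closedin X {c \<in> topspace X. s \<otimes>\<^bsub>G\<^esub> c \<in> St}"
    using closedin_continuous_map_preimage[OF tg_left[OF assms(1) sG] clSt] .
  ultimately have "closedin X C" using compactin_imp_closedin[OF HX assms(5)] by auto
  then have cC: "compactin X C" using closed_compactin[OF assms(5)] by (auto simp: C_def)
  have tC: "t \<in> C" using assms(7,9) by (auto simp: C_def St_def)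
  have imC: "(\<lambda>c. s \<otimes>\<^bsub>G\<^esub> c) ` C \<subseteq> (\<lambda>x. x \<otimes>\<^bsub>G\<^esub> t) ` S"
    by (auto simp: C_def St_def)
  have "\<not> countable_character_at (subtopology X C) t"
  proof
    assume "countable_character_at (subtopology X C) t"
    then obtain \<BB> where cB: "countable \<BB>" and Bo: "\<forall>V\<in>\<BB>. openin (subtopology X C) V \<and> t \<in> V"
      and Bb: "\<forall>U. openin (subtopology X C) U \<and> t \<in> U \<longrightarrow> (\<exists>V\<in>\<BB>. V \<subseteq> U)"
      unfolding countable_character_at_def by blast
    have "\<forall>V\<in>\<BB>. \<exists>W. openin X W \<and> V = W \<inter> C" using Bo by (auto simp: openin_subtopology)
    from bchoice[OF this] obtain w where w: "\<forall>V\<in>\<BB>. openin X (w V) \<and> V = w V \<inter> C" by blast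
    define F1 where "F1 = w ` \<BB>"
    have F1o: "\<forall>W\<in>F1. openin X W \<and> t \<in> W" using w Bo by (auto simp: F1_def)
    have F1s: "\<forall>c\<in>C. c \<noteq> t \<longrightarrow> (\<exists>W\<in>F1. c \<notin> W)"
    proof (intro ballI impI)
      fix c assume c: "c \<in> C" "c \<noteq> t"
      have ctop: "c \<in> topspace X" using c Tsub top by (auto simp: C_def)
      have "openin X (topspace X - {c})"
        using closedin_t1_singleton[OF assms(2) ctop] by blast
      then have "openin (subtopology X C) ((topspace X - {c}) \<inter> C)"
        by (auto simp: openin_subtopology)
      moreover have "t \<in> (topspace X - {c}) \<inter> C" using tC c tG top by auto
      ultimately obtain V where V: "V \<in> \<BB>" "V \<subseteq> (topspace X - {c}) \<inter> C" using Bb by blast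
      then have "c \<notin> w V" using w c by blast
      then show "\<exists>W\<in>F1. c \<notin> W" using V by (auto simp: F1_def)
    qed
    obtain D0 where cD0: "countable D0" and D0S: "D0 \<subseteq> topspace (subtopology X S)"
      and D0d: "(subtopology X S) closure_of D0 = topspace (subtopology X S)"
      using assms(6) unfolding separable_space_def by blast
    have topS: "topspace (subtopology X S) = S" using Ssub top by auto
    define D where "D = D0 - {s}"
    have cD: "countable D" using cD0 by (auto simp: D_def)
    have DS: "D \<subseteq> S" using D0S topS by (auto simp: D_def)
    have DG: "D \<subseteq> carrier G" using DS Ssub by auto
    have Dden: "\<forall>N. openin X N \<and> s \<in> N \<longrightarrow> (\<exists>d\<in>D. d \<in> N)"
    proof (intro allI impI)
      fix N assume N: "openin X N \<and> s \<in> N"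
      have der: "\<forall>T. s \<in> T \<and> openin X T \<longrightarrow> (\<exists>y\<noteq>s. y \<in> S \<and> y \<in> T)"
        using assms(8) unfolding in_derived_set_of by (rule conjunct2)
      obtain y where y: "y \<noteq> s" "y \<in> S" "y \<in> N" using der N by blast
      have "closedin X {s}" using closedin_t1_singleton[OF assms(2)] sG top by simp
      then have "openin X (N - {s})" using N by (intro openin_diff) simp_all
      then have o2: "openin (subtopology X S) ((N - {s}) \<inter> S)" unfolding openin_subtopology by blast
      have "y \<in> (subtopology X S) closure_of D0" unfolding D0d topS by (rule y(2))
      then have clo: "\<forall>T. y \<in> T \<and> openin (subtopology X S) T \<longrightarrow> (\<exists>z. z \<in> D0 \<and> z \<in> T)"
        unfolding in_closure_of by (rule conjunct2)
      have ymem: "y \<in> (N - {s}) \<inter> S" using y by blast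
      obtain z where z: "z \<in> D0" "z \<in> (N - {s}) \<inter> S"
        using clo[rule_format, OF conjI[OF ymem o2]] by blast
      then have "z \<in> D" unfolding D_def by blast
      then show "\<exists>d\<in>D. d \<in> N" using z(2) by blast
    qed
    have "\<forall>d\<in>D. \<exists>W1 W2. openin X W1 \<and> openin X W2 \<and> s \<otimes>\<^bsub>G\<^esub> t \<in> W1 \<and> d \<otimes>\<^bsub>G\<^esub> t \<in> W2 \<and> disjnt W1 W2"
    proof
      fix d assume d: "d \<in> D"
      have "d \<in> carrier G" "d \<noteq> s" using d DG by (auto simp: D_def)
      then have "s \<otimes>\<^bsub>G\<^esub> t \<noteq> d \<otimes>\<^bsub>G\<^esub> t" using group.right_cancel[OF grp tG sG] by auto
      moreover have "s \<otimes>\<^bsub>G\<^esub> t \<in> topspace X" "d \<otimes>\<^bsub>G\<^esub> t \<in> topspace X"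
        using \<open>d \<in> carrier G\<close> sG tG top monoid.m_closed[OF group.is_monoid[OF grp]] by auto
      ultimately show "\<exists>W1 W2. openin X W1 \<and> openin X W2 \<and> s \<otimes>\<^bsub>G\<^esub> t \<in> W1 \<and> d \<otimes>\<^bsub>G\<^esub> t \<in> W2 \<and> disjnt W1 W2"
        using HX unfolding Hausdorff_space_def by blast
    qed
    from bchoice[OF this] obtain w1 where "\<forall>d\<in>D. \<exists>W2. openin X (w1 d) \<and> openin X W2 \<and> s \<otimes>\<^bsub>G\<^esub> t \<in> w1 d \<and> d \<otimes>\<^bsub>G\<^esub> t \<in> W2 \<and> disjnt (w1 d) W2"
      by blast
    from bchoice[OF this] obtain w2 where ww: "\<forall>d\<in>D. openin X (w1 d) \<and> openin X (w2 d) \<and> s \<otimes>\<^bsub>G\<^esub> t \<in> w1 d \<and> d \<otimes>\<^bsub>G\<^esub> t \<in> w2 d \<and> disjnt (w1 d) (w2 d)"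
      by blast
    define Od where "Od d = {c \<in> topspace X. s \<otimes>\<^bsub>G\<^esub> c \<in> w1 d}" for d
    have Oo: "\<forall>d\<in>D. openin X (Od d) \<and> t \<in> Od d"
    proof
      fix d assume d: "d \<in> D"
      have "openin X (w1 d)" using ww d by blast
      then have "openin X (Od d)" unfolding Od_def
        by (rule openin_continuous_map_preimage[OF tg_left[OF assms(1) sG]])
      moreover have "s \<otimes>\<^bsub>G\<^esub> t \<in> w1 d" using ww d by blast
      then have "t \<in> Od d" unfolding Od_def using tG top by simp
      ultimately show "openin X (Od d) \<and> t \<in> Od d" by blast
    qed
    define X0 where "X0 = T \<inter> \<Inter>F1 \<inter> \<Inter>(Od ` D)"
    define P where "P = (\<lambda>c. s \<otimes>\<^bsub>G\<^esub> c) ` (X0 - {t})"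
    define Q where "Q = (\<lambda>d. d \<otimes>\<^bsub>G\<^esub> t) ` D"
    have mc: "\<And>x y. x \<in> carrier G \<Longrightarrow> y \<in> carrier G \<Longrightarrow> x \<otimes>\<^bsub>G\<^esub> y \<in> carrier G"
      by (rule monoid.m_closed[OF group.is_monoid[OF grp]])
    have PX: "P \<subseteq> topspace X" using Tsub sG mc top by (auto simp: P_def X0_def)
    have QX: "Q \<subseteq> topspace X" using DG tG mc top by (auto simp: Q_def)
    have PQ1: "P \<inter> X closure_of Q = {}"
    proof -
      have "Q \<subseteq> St" using DS by (auto simp: Q_def St_def)
      then have "X closure_of Q \<subseteq> St" using closure_of_minimal clSt by blast
      moreover have "P \<inter> St = {}"
      proof (rule ccontr)
        assume "P \<inter> St \<noteq> {}"
        then obtain c where c: "c \<in> X0 - {t}" "s \<otimes>\<^bsub>G\<^esub> c \<in> St" by (auto simp: P_def)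
        then have "c \<in> C" by (auto simp: C_def X0_def)
        then obtain W where "W \<in> F1" "c \<notin> W" using F1s c by blast
        then show False using c by (auto simp: X0_def)
      qed
      ultimately show ?thesis by blast
    qed
    have QP1: "Q \<inter> X closure_of P = {}"
    proof (rule ccontr)
      assume "Q \<inter> X closure_of P \<noteq> {}"
      then obtain d where d: "d \<in> D" "d \<otimes>\<^bsub>G\<^esub> t \<in> X closure_of P" by (auto simp: Q_def)
      then obtain y where "y \<in> P" "y \<in> w2 d" using ww unfolding in_closure_of by blast
      then obtain c where "c \<in> X0" "s \<otimes>\<^bsub>G\<^esub> c \<in> w2 d" by (auto simp: P_def)
      then have "s \<otimes>\<^bsub>G\<^esub> c \<in> w1 d" using d by (auto simp: X0_def Od_def)
      then show False using ww d \<open>s \<otimes>\<^bsub>G\<^esub> c \<in> w2 d\<close> by (auto simp: disjnt_iff)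
    qed
    have sepd: "separatedin X P Q" unfolding separatedin_def using PX QX PQ1 QP1 by (intro conjI)
    have "\<exists>U V. openin X U \<and> openin X V \<and> P \<subseteq> U \<and> Q \<subseteq> V \<and> disjnt U V"
      using assms(3)[unfolded hereditarily_normal_separation, rule_format, OF sepd] .
    then obtain U V where UV: "openin X U" "openin X V" "P \<subseteq> U" "Q \<subseteq> V" "disjnt U V"
      by blast
    have "V \<inter> U = {}" using UV(5) by (simp add: disjnt_def Int_commute)
    then have VU: "V \<inter> X closure_of U = {}"
      using openin_Int_closure_of_eq_empty[OF UV(2)] by simp
    define R where "R d = {c \<in> topspace X. d \<otimes>\<^bsub>G\<^esub> c \<in> topspace X - X closure_of U}" for d
    have Ro: "\<forall>d\<in>D. openin X (R d) \<and> t \<in> R d"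
    proof
      fix d assume d: "d \<in> D"
      have "openin X (R d)" unfolding R_def
        using DG d by (intro openin_continuous_map_preimage[OF tg_left[OF assms(1)]]) (auto intro: openin_diff closedin_closure_of)
      moreover have "d \<otimes>\<^bsub>G\<^esub> t \<in> V" using UV(4) d by (auto simp: Q_def)
      ultimately show "openin X (R d) \<and> t \<in> R d"
        using VU QX d tG top by (auto simp: R_def Q_def)
    qed
    define Fam where "Fam = F1 \<union> Od ` D \<union> R ` D"
    have cFam: "countable Fam" using cB cD by (auto simp: Fam_def F1_def)
    have Famo: "\<forall>W\<in>Fam. openin X W \<and> t \<in> W" using F1o Oo Ro by (auto simp: Fam_def)
    have Fams: "\<forall>c\<in>T. c \<noteq> t \<longrightarrow> (\<exists>W\<in>Fam. c \<notin> W)"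
    proof (intro ballI impI)
      fix c assume c: "c \<in> T" "c \<noteq> t"
      show "\<exists>W\<in>Fam. c \<notin> W"
      proof (rule ccontr)
        assume "\<not> (\<exists>W\<in>Fam. c \<notin> W)"
        then have allW: "\<forall>W\<in>Fam. c \<in> W" by blast
        then have "c \<in> X0" using c by (auto simp: X0_def Fam_def)
        then have "s \<otimes>\<^bsub>G\<^esub> c \<in> U" using c UV(3) by (auto simp: P_def)
        have cG: "c \<in> carrier G" using c Tsub by auto
        have "openin X {x \<in> topspace X. x \<otimes>\<^bsub>G\<^esub> c \<in> U}"
          using openin_continuous_map_preimage[OF tg_right[OF assms(1) cG] UV(1)] .
        moreover have "s \<in> {x \<in> topspace X. x \<otimes>\<^bsub>G\<^esub> c \<in> U}"
          using \<open>s \<otimes>\<^bsub>G\<^esub> c \<in> U\<close> sG top by auto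
        ultimately obtain d where d: "d \<in> D" "d \<otimes>\<^bsub>G\<^esub> c \<in> U" using Dden by blast
        then have "d \<otimes>\<^bsub>G\<^esub> c \<in> X closure_of U"
          using closure_of_subset[OF openin_subset[OF UV(1)]] by blast
        moreover have "c \<in> R d" using allW d by (auto simp: Fam_def)
        ultimately show False by (auto simp: R_def)
      qed
    qed
    have "countable_character_at (subtopology X T) t"
      using cc_from_gdelta[OF RX HX assms(5) assms(9) cFam Famo Fams] .
    then show False using assms(10) by blast
  qed
  then show ?thesis using cC tC imC by (auto simp: C_def)
qed

end
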